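(* Let $\mathcal S,\mathcal W,\mathcal Z$ be measurable spaces and let $S,W,Z$ be the coordinate projections from $\mathcal S\times\mathcal W\times\mathcal Z$ onto $\mathcal S,\mathcal W,\mathcal Z$. Then the set $\{\pi\in\mathcal P(\mathcal S\times\mathcal W\times\mathcal Z): S\perp\!\!\!\perp_Z W \text{ under }\pi\}$ is closed under convergence in total variation, where $\mathcal P(\mathcal S\times\mathcal W\times\mathcal Z)$ is the set of probability measures on the product $\sigma$-algebra.
   Context: $S\perp\!\!\!\perp_Z W$ under $\pi$ means $\pi[S\in A,W\in B\mid Z]=\pi[S\in A\mid Z]\,\pi[W\in B\mid Z]$ $\pi$-a.s. for all measurable $A\subseteq\mathcal S$, $B\subseteq\mathcal W$ (equivalently $\pi[S\in A\mid W,Z]=\pi[S\in A\mid Z]$ $\pi$-a.s. for all measurable $A$). Convergence in total variation means $\sup_{C}|\pi^k(C)-\pi(C)|\to0$ over measurable sets $C$. *)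

theory Defs
  imports "HOL-Probability.Probability"
begin

definition cond_prob :: "'a measure \<Rightarrow> 'a measure \<Rightarrow> 'a set \<Rightarrow> 'a \<Rightarrow> real" where
  "cond_prob M F E = real_cond_exp M F (indicator E)"

definition cond_indep ::
  "'a measure \<Rightarrow> ('a \<Rightarrow> 'b) \<Rightarrow> 'b measure \<Rightarrow> ('a \<Rightarrow> 'c) \<Rightarrow> 'c measure
     \<Rightarrow> ('a \<Rightarrow> 'd) \<Rightarrow> 'd measure \<Rightarrow> bool" where
  "cond_indep M S Ms W Mw Z Mz \<longleftrightarrow>
     (\<forall>A\<in>sets Ms. \<forall>B\<in>sets Mw.
        AE x in M.
          cond_prob M (vimage_algebra (space M) Z Mz)
              (S -` A \<inter> W -` B \<inter> space M) x
          = cond_prob M (vimage_algebra (space M) Z Mz) (S -` A \<inter> space M) x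
            * cond_prob M (vimage_algebra (space M) Z Mz) (W -` B \<inter> space M) x)"

definition prob_measures :: "'a measure \<Rightarrow> 'a measure set" where
  "prob_measures \<Omega> = {P. sets P = sets \<Omega> \<and> prob_space P}"

definition tv_converges :: "(nat \<Rightarrow> 'a measure) \<Rightarrow> 'a measure \<Rightarrow> bool" where
  "tv_converges P Q \<longleftrightarrow>
     (\<lambda>n. SUP C\<in>sets Q. \<bar>measure (P n) C - measure Q C\<bar>) \<longlonglongrightarrow> 0"

end

theory Submission
  imports Defs
begin


lemma count_floor:
  fixes y :: real and k :: nat
  assumes "0 \<le> y" "y \<le> real k"
  shows "{j\<in>{1..k}. real j \<le> y} = {1..nat \<lfloor>y\<rfloor>}"
proof -
  have R: "real j \<le> y \<longleftrightarrow> j \<le> nat \<lfloor>y\<rfloor>" for j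
  proof -
    have "real j \<le> y \<longleftrightarrow> int j \<le> \<lfloor>y\<rfloor>" by (simp add: le_floor_iff)
    also have "\<dots> \<longleftrightarrow> j \<le> nat \<lfloor>y\<rfloor>" using assms(1) by (simp add: le_nat_iff)
    finally show ?thesis .
  qed
  have K: "nat \<lfloor>y\<rfloor> \<le> k"
    using floor_mono[OF assms(2)] unfolding floor_of_nat by (simp only: nat_le_iff)
  show ?thesis
  proof (rule set_eqI)
    fix j show "j \<in> {j\<in>{1..k}. real j \<le> y} \<longleftrightarrow> j \<in> {1..nat \<lfloor>y\<rfloor>}"
      unfolding mem_Collect_eq atLeastAtMost_iff R using K by linarith
  qed
qed

lemma approx_bounds:
  fixes y :: real and k :: nat
  assumes "0 \<le> y" "y \<le> 1" "k > 0"
  shows "(\<Sum>j\<in>{1..k}. (if real j \<le> real k * y then 1 else 0::real)) / real k \<le> y"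
    "y - 1 / real k \<le> (\<Sum>j\<in>{1..k}. (if real j \<le> real k * y then 1 else 0::real)) / real k"
proof -
  have y0: "0 \<le> real k * y" "real k * y \<le> real k" using assms by (auto simp: mult_le_cancel_left1)
  have "(\<Sum>j\<in>{1..k}. (if real j \<le> real k * y then 1 else 0::real))
        = real (card {j\<in>{1..k}. real j \<le> real k * y})"
    by (simp add: sum.If_cases Int_def conj_commute)
  also have "\<dots> = real (nat \<lfloor>real k * y\<rfloor>)" using count_floor[OF y0] by simp
  also have "\<dots> = of_int \<lfloor>real k * y\<rfloor>" using y0 by simp
  finally have e: "(\<Sum>j\<in>{1..k}. (if real j \<le> real k * y then 1 else 0::real)) = of_int \<lfloor>real k * y\<rfloor>" .
  have a: "of_int \<lfloor>real k * y\<rfloor> \<le> real k * y" by simp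
  have b: "real k * y - 1 \<le> of_int \<lfloor>real k * y\<rfloor>" by linarith
  show "(\<Sum>j\<in>{1..k}. (if real j \<le> real k * y then 1 else 0::real)) / real k \<le> y"
    unfolding e using a assms by (simp add: divide_le_eq mult.commute)
  show "y - 1 / real k \<le> (\<Sum>j\<in>{1..k}. (if real j \<le> real k * y then 1 else 0::real)) / real k"
    unfolding e using b assms by (simp add: le_divide_eq diff_divide_distrib algebra_simps)
qed



lemma tv_fun:
  fixes d :: real
  assumes P: "prob_space P" and Q: "prob_space Q" and sPQ: "sets P = sets Q"
    and gm: "g \<in> borel_measurable Q" and gb: "\<And>x. x\<in>space Q \<Longrightarrow> 0 \<le> g x \<and> g x \<le> 1"
    and dC: "\<And>C. C\<in>sets Q \<Longrightarrow> \<bar>measure P C - measure Q C\<bar> \<le> d"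
  shows "\<bar>(\<integral>x. g x \<partial>P) - (\<integral>x. g x \<partial>Q)\<bar> \<le> d"
proof (rule ccontr)
  assume "\<not> ?thesis"
  then have pos: "0 < \<bar>(\<integral>x. g x \<partial>P) - (\<integral>x. g x \<partial>Q)\<bar> - d" by simp
  obtain k :: nat where k: "2 / (\<bar>(\<integral>x. g x \<partial>P) - (\<integral>x. g x \<partial>Q)\<bar> - d) < real k"
    using reals_Archimedean2 by blast
  have k0: "k > 0" using k pos
    by (metis divide_pos_pos gr0I of_nat_0 order_less_asym zero_less_numeral)
  have spPQ: "space P = space Q" using sPQ sets_eq_imp_space_eq by blast
  have gmP: "g \<in> borel_measurable P" using gm measurable_cong_sets[OF sPQ refl] by blast
  define S where "S j = {x\<in>space Q. real j \<le> real k * g x}" for j :: nat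
  have SQ: "S j \<in> sets Q" for j unfolding S_def using gm by measurable
  have SP: "S j \<in> sets P" for j using SQ sPQ by simp
  define gk where "gk x = (\<Sum>j\<in>{1..k}. indicator (S j) x) / real k" for x
  have gk_eq: "gk x = (\<Sum>j\<in>{1..k}. (if real j \<le> real k * g x then 1 else 0::real)) / real k"
    if "x \<in> space Q" for x unfolding gk_def S_def using that
    by (intro arg_cong[where f="\<lambda>s. s / real k"] sum.cong refl) (simp add: indicator_def)
  have gk1: "gk x \<le> g x" "g x - 1 / real k \<le> gk x" if "x \<in> space Q" for x
    using approx_bounds[of "g x" k] gb[OF that] k0 gk_eq[OF that] by auto
  have k1: "1 / real k \<le> 1" using k0 by simp
  have gkabs: "\<bar>gk x\<bar> \<le> 1" if "x \<in> space Q" for x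
    using gk1[OF that] gb[OF that] k1 by linarith
  have int_gk: "(\<integral>x. gk x \<partial>M) = (\<Sum>j\<in>{1..k}. measure M (S j)) / real k"
    if "prob_space M" "\<And>j. S j \<in> sets M" for M
  proof -
    interpret prob_space M by fact
    have "(\<integral>x. gk x \<partial>M) = (\<Sum>j\<in>{1..k}. (\<integral>x. indicator (S j) x \<partial>M)) / real k"
      unfolding gk_def using that(2) by (simp add: integrable_indicator_iff emeasure_eq_measure)
    then show ?thesis using that(2) by (simp add: sets.Int_space_eq2)
  qed
  have c: "\<bar>(\<integral>x. gk x \<partial>P) - (\<integral>x. gk x \<partial>Q)\<bar> \<le> d"
  proof -
    have "(\<integral>x. gk x \<partial>P) - (\<integral>x. gk x \<partial>Q) = (\<Sum>j\<in>{1..k}. measure P (S j) - measure Q (S j)) / real k"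
      using int_gk[OF P SP] int_gk[OF Q SQ] by (simp add: sum_subtractf diff_divide_distrib)
    also have "\<bar>\<dots>\<bar> \<le> (\<Sum>j\<in>{1..k}. \<bar>measure P (S j) - measure Q (S j)\<bar>) / real k"
      by (simp add: divide_right_mono sum_abs)
    also have "\<dots> \<le> (\<Sum>j\<in>{1..k}. d) / real k"
      by (intro divide_right_mono sum_mono dC SQ) simp
    also have "\<dots> = d" using k0 by simp
    finally show ?thesis .
  qed
  have gkm: "gk \<in> borel_measurable Q" unfolding gk_def using SQ by measurable
  have d_approx: "\<bar>(\<integral>x. g x \<partial>M) - (\<integral>x. gk x \<partial>M)\<bar> \<le> 1 / real k"
    if "prob_space M" "sets M = sets Q" for M
  proof -
    interpret prob_space M by fact
    have sp: "space M = space Q" using that(2) sets_eq_imp_space_eq by blast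
    have gM: "g \<in> borel_measurable M" "gk \<in> borel_measurable M"
      using gm gkm measurable_cong_sets[OF that(2) refl] by blast+
    have ig: "integrable M g"
      by (rule integrable_const_bound[where B=1]) (use gb sp gM in auto)
    have igk: "integrable M gk"
      by (rule integrable_const_bound[where B=1]) (use gkabs sp gM in auto)
    have gd: "g x - gk x \<le> 1 / real k" if "x \<in> space M" for x
      using gk1(2)[of x] sp that by simp
    have "(\<integral>x. g x \<partial>M) - (\<integral>x. gk x \<partial>M) = (\<integral>x. g x - gk x \<partial>M)"
      using ig igk by simp
    moreover have "(\<integral>x. g x - gk x \<partial>M) \<le> (\<integral>x. 1 / real k \<partial>M)"
      using ig igk gd by (intro integral_mono) auto
    moreover have "0 \<le> (\<integral>x. g x - gk x \<partial>M)"
      using gk1 sp by (intro integral_nonneg_AE AE_I2) auto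
    ultimately show ?thesis by (simp add: prob_space)
  qed
  have "\<bar>(\<integral>x. g x \<partial>P) - (\<integral>x. g x \<partial>Q)\<bar> \<le> d + 2 / real k"
    using d_approx[OF P sPQ] d_approx[OF Q refl] c by linarith
  moreover have "2 / real k < \<bar>(\<integral>x. g x \<partial>P) - (\<integral>x. g x \<partial>Q)\<bar> - d"
    using k pos k0 by (simp add: divide_less_eq mult.commute pos_divide_less_eq)
  ultimately show False by linarith
qed



lemma cp_int:
  assumes M: "prob_space M" and sub: "subalgebra M F" and X: "X \<in> sets M" and D: "D \<in> sets F"
    and gm: "g \<in> borel_measurable M" and gb: "\<And>x. x \<in> space M \<Longrightarrow> \<bar>g x\<bar> \<le> 1"
    and ae: "AE x in M. g x = cond_prob M F X x"
  shows "(\<integral>x. indicator D x * g x \<partial>M) = measure M (D \<inter> X)"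
proof -
  interpret prob_space M by fact
  interpret finite_measure_subalgebra M F by unfold_locales (fact sub)
  have DM: "D \<in> sets M" using D sub unfolding subalgebra_def by blast
  have "(\<integral>x. indicator D x * g x \<partial>M) = (\<integral>x. indicator D x * real_cond_exp M F (indicator X) x \<partial>M)"
    using ae unfolding cond_prob_def by (intro integral_cong_AE) (use gm DM in auto)
  also have "\<dots> = (\<integral>x. indicator D x * indicator X x \<partial>M)"
  proof (rule real_cond_exp_intg(2))
    have "(\<lambda>x. indicator D x * indicator X x :: real) = indicator (D \<inter> X)"
      by (auto simp: indicator_def fun_eq_iff)
    then show "integrable M (\<lambda>x. indicator D x * indicator X x :: real)"
      using DM X by (simp add: integrable_indicator_iff emeasure_eq_measure)
    show "indicator D \<in> borel_measurable F" using D by simp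
    show "(indicator X :: _ \<Rightarrow> real) \<in> borel_measurable M" using X by simp
  qed
  also have "\<dots> = measure M (D \<inter> X)"
  proof -
    have "(\<lambda>x. indicator D x * indicator X x :: real) = indicator (D \<inter> X)"
      by (auto simp: indicator_def fun_eq_iff)
    then show ?thesis using DM X by simp
  qed
  finally show ?thesis .
qed

lemma bnd_int:
  fixes f :: "'a \<Rightarrow> real"
  assumes "finite_measure M" "f \<in> borel_measurable M" "\<And>x. x \<in> space M \<Longrightarrow> \<bar>f x\<bar> \<le> B"
  shows "integrable M f"
  using assms by (intro finite_measure.integrable_const_bound[where B=B]) auto

lemma ce_close:
  fixes d :: real
  assumes P: "prob_space P" and Q: "prob_space Q" and sPQ: "sets P = sets Q"
    and subP: "subalgebra P F" and subQ: "subalgebra Q F" and X: "X \<in> sets Q"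
    and gF: "g \<in> borel_measurable F" and gb: "\<And>x. x\<in>space Q \<Longrightarrow> 0 \<le> g x \<and> g x \<le> 1"
    and gae: "AE x in P. g x = cond_prob P F X x"
    and hF: "h \<in> borel_measurable F" and hb: "\<And>x. x\<in>space Q \<Longrightarrow> 0 \<le> h x \<and> h x \<le> 1"
    and hae: "AE x in Q. h x = cond_prob Q F X x"
    and dC: "\<And>C. C\<in>sets Q \<Longrightarrow> \<bar>measure P C - measure Q C\<bar> \<le> d"
  shows "(\<integral>x. \<bar>g x - h x\<bar> \<partial>Q) \<le> 4 * d"
proof -
  have spPQ: "space P = space Q" using sPQ sets_eq_imp_space_eq by blast
  have spF: "space F = space Q" using subQ unfolding subalgebra_def by simp
  have gQ: "g \<in> borel_measurable Q" "h \<in> borel_measurable Q"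
    using gF hF measurable_from_subalg[OF subQ] by blast+
  have gP: "g \<in> borel_measurable P" "h \<in> borel_measurable P"
    using gF hF measurable_from_subalg[OF subP] by blast+
  have fmP: "finite_measure P" using P by (simp add: prob_space_def)
  have fmQ: "finite_measure Q" using Q by (simp add: prob_space_def)
  define D where "D = {x\<in>space F. h x \<le> g x}"
  have DF: "D \<in> sets F" unfolding D_def using gF hF by measurable
  have DcF: "space Q - D \<in> sets F" using DF spF by (metis sets.compl_sets)
  have sFQ: "sets F \<subseteq> sets Q" using subQ unfolding subalgebra_def by simp
  have DQ: "D \<in> sets Q" "space Q - D \<in> sets Q" using DF DcF sFQ by blast+
  have XP: "X \<in> sets P" using X sPQ by simp
  have key: "(\<integral>x. indicator E x * g x \<partial>Q) - (\<integral>x. indicator E x * h x \<partial>Q) \<le> 2 * d"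
            "(\<integral>x. indicator E x * h x \<partial>Q) - (\<integral>x. indicator E x * g x \<partial>Q) \<le> 2 * d"
    if EF: "E \<in> sets F" for E
  proof -
    have EQ: "E \<in> sets Q" using EF sFQ by blast
    have EP: "E \<in> sets P" using EQ sPQ by simp
    have a: "(\<integral>x. indicator E x * h x \<partial>Q) = measure Q (E \<inter> X)"
      by (rule cp_int[OF Q subQ X EF gQ(2) _ hae]) (use hb in auto)
    have b: "(\<integral>x. indicator E x * g x \<partial>P) = measure P (E \<inter> X)"
      by (rule cp_int[OF P subP XP EF gP(1) _ gae]) (use gb spPQ in auto)
    have c: "\<bar>(\<integral>x. indicator E x * g x \<partial>P) - (\<integral>x. indicator E x * g x \<partial>Q)\<bar> \<le> d"
      by (rule tv_fun[OF P Q sPQ _ _ dC]) (use gQ EQ gb in \<open>auto simp: indicator_def\<close>)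
    have e: "\<bar>measure P (E \<inter> X) - measure Q (E \<inter> X)\<bar> \<le> d" using dC EQ X by blast
    show "(\<integral>x. indicator E x * g x \<partial>Q) - (\<integral>x. indicator E x * h x \<partial>Q) \<le> 2 * d"
         "(\<integral>x. indicator E x * h x \<partial>Q) - (\<integral>x. indicator E x * g x \<partial>Q) \<le> 2 * d"
      using a b c e by linarith+
  qed
  let ?Dc = "space Q - D"
  have ints: "integrable Q (\<lambda>x. indicator E x * f x)"
    if "E \<in> sets Q" "f \<in> borel_measurable Q" "\<And>x. x \<in> space Q \<Longrightarrow> \<bar>f x\<bar> \<le> 1" for E and f :: "_ \<Rightarrow> real"
  proof (rule bnd_int[OF fmQ])
    show "(\<lambda>x. indicator E x * f x) \<in> borel_measurable Q"
      using that by (intro borel_measurable_times borel_measurable_indicator) auto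
    fix x assume "x \<in> space Q"
    then show "\<bar>indicator E x * f x\<bar> \<le> (1::real)" using that by (auto simp: indicator_def)
  qed
  have i1: "integrable Q (\<lambda>x. indicator D x * g x)" "integrable Q (\<lambda>x. indicator D x * h x)"
      "integrable Q (\<lambda>x. indicator ?Dc x * g x)" "integrable Q (\<lambda>x. indicator ?Dc x * h x)"
    using ints DQ gQ gb hb by (metis abs_of_nonneg)+
  have "(\<integral>x. \<bar>g x - h x\<bar> \<partial>Q) = (\<integral>x. (indicator D x * g x - indicator D x * h x)
        + (indicator ?Dc x * h x - indicator ?Dc x * g x) \<partial>Q)"
    by (rule Bochner_Integration.integral_cong) (auto simp: indicator_def D_def spF)
  also have "\<dots> = ((\<integral>x. indicator D x * g x \<partial>Q) - (\<integral>x. indicator D x * h x \<partial>Q))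
        + ((\<integral>x. indicator ?Dc x * h x \<partial>Q) - (\<integral>x. indicator ?Dc x * g x \<partial>Q))"
    using i1 by simp
  also have "\<dots> \<le> 2 * d + 2 * d" using key(1)[OF DF] key(2)[OF DcF] by linarith
  finally show ?thesis by simp
qed



lemma cp_clamp:
  assumes M: "prob_space M" and sub: "subalgebra M F" and X: "X \<in> sets M"
  shows "(\<lambda>x. max 0 (min 1 (cond_prob M F X x))) \<in> borel_measurable F"
    "\<And>x. 0 \<le> max 0 (min 1 (cond_prob M F X x)) \<and> max 0 (min 1 (cond_prob M F X x)) \<le> (1::real)"
    "AE x in M. max 0 (min 1 (cond_prob M F X x)) = cond_prob M F X x"
proof -
  interpret prob_space M by fact
  interpret finite_measure_subalgebra M F by unfold_locales (fact sub)
  show "(\<lambda>x. max 0 (min 1 (cond_prob M F X x))) \<in> borel_measurable F"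
    unfolding cond_prob_def by measurable
  show "\<And>x. 0 \<le> max 0 (min 1 (cond_prob M F X x)) \<and> max 0 (min 1 (cond_prob M F X x)) \<le> (1::real)"
    by simp
  have iX: "integrable M (indicator X :: _ \<Rightarrow> real)" using X
    by (simp add: integrable_indicator_iff emeasure_eq_measure)
  have a: "AE x in M. 0 \<le> cond_prob M F X x"
    unfolding cond_prob_def by (rule real_cond_exp_pos) (use X in auto)
  have b1: "AE x in M. cond_prob M F X x \<le> real_cond_exp M F (\<lambda>_. 1) x"
    unfolding cond_prob_def by (rule real_cond_exp_mono) (use iX in \<open>auto simp: indicator_def\<close>)
  have b2: "AE x in M. real_cond_exp M F (\<lambda>_. 1) x = 1"
    by (rule real_cond_exp_F_meas) auto
  show "AE x in M. max 0 (min 1 (cond_prob M F X x)) = cond_prob M F X x"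
    using a b1 b2 by eventually_elim auto
qed

lemma ineq4:
  fixes p1 p2 p3 q1 q2 q3 :: real
  assumes "0 \<le> p1" "p1 \<le> 1" "0 \<le> q2" "q2 \<le> 1"
  shows "\<bar>q3 - q1*q2\<bar> \<le> \<bar>q3 - p3\<bar> + \<bar>p3 - p1*p2\<bar> + \<bar>p1 - q1\<bar> + \<bar>p2 - q2\<bar>"
proof -
  have e: "p1*p2 - q1*q2 = p1*(p2-q2) + (p1-q1)*q2" by (simp add: algebra_simps)
  have a: "\<bar>p1*(p2-q2)\<bar> \<le> \<bar>p2-q2\<bar>"
    unfolding abs_mult using assms by (intro mult_left_le_one_le) auto
  have b: "\<bar>(p1-q1)*q2\<bar> \<le> \<bar>p1-q1\<bar>"
    unfolding abs_mult using assms by (intro mult_right_le_one_le) auto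
  have "\<bar>p1*p2 - q1*q2\<bar> \<le> \<bar>p1-q1\<bar> + \<bar>p2-q2\<bar>" unfolding e using a b by linarith
  then show ?thesis by linarith
qed

lemma ci_step:
  fixes d :: real
  assumes P: "prob_space P" and Q: "prob_space Q" and sPQ: "sets P = sets Q"
    and subP: "subalgebra P F" and subQ: "subalgebra Q F"
    and X1: "X1 \<in> sets Q" and X2: "X2 \<in> sets Q" and X3: "X3 \<in> sets Q"
    and ciP: "AE x in P. cond_prob P F X3 x = cond_prob P F X1 x * cond_prob P F X2 x"
    and dC: "\<And>C. C\<in>sets Q \<Longrightarrow> \<bar>measure P C - measure Q C\<bar> \<le> d"
  shows "(\<integral>x. \<bar>max 0 (min 1 (cond_prob Q F X3 x))
            - max 0 (min 1 (cond_prob Q F X1 x)) * max 0 (min 1 (cond_prob Q F X2 x))\<bar> \<partial>Q) \<le> 13 * d"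
proof -
  define fP where "fP Y x = max 0 (min 1 (cond_prob P F Y x))" for Y x
  define fQ where "fQ Y x = max 0 (min 1 (cond_prob Q F Y x))" for Y x
  have fmQ: "finite_measure Q" using Q by (simp add: prob_space_def)
  have spPQ: "space P = space Q" using sPQ sets_eq_imp_space_eq by blast
  have YP: "Y \<in> sets P" if "Y \<in> sets Q" for Y using that sPQ by simp
  have fPF: "fP Y \<in> borel_measurable F" if "Y \<in> sets Q" for Y
    unfolding fP_def using cp_clamp(1)[OF P subP YP[OF that]] .
  have fQF: "fQ Y \<in> borel_measurable F" if "Y \<in> sets Q" for Y
    unfolding fQ_def using cp_clamp(1)[OF Q subQ that] .
  have fPb: "0 \<le> fP Y x \<and> fP Y x \<le> 1" for Y x unfolding fP_def by simp
  have fQb: "0 \<le> fQ Y x \<and> fQ Y x \<le> 1" for Y x unfolding fQ_def by simp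
  have fPae: "AE x in P. fP Y x = cond_prob P F Y x" if "Y \<in> sets Q" for Y
    unfolding fP_def using cp_clamp(3)[OF P subP YP[OF that]] .
  have fQae: "AE x in Q. fQ Y x = cond_prob Q F Y x" if "Y \<in> sets Q" for Y
    unfolding fQ_def using cp_clamp(3)[OF Q subQ that] .
  have fPQ: "fP Y \<in> borel_measurable Q" "fQ Y \<in> borel_measurable Q" if "Y \<in> sets Q" for Y
    using fPF[OF that] fQF[OF that] measurable_from_subalg[OF subQ] by blast+
  have close: "(\<integral>x. \<bar>fP Y x - fQ Y x\<bar> \<partial>Q) \<le> 4 * d" if "Y \<in> sets Q" for Y
    by (rule ce_close[OF P Q sPQ subP subQ that fPF[OF that] _ fPae[OF that] fQF[OF that] _ fQae[OF that] dC])
       (use fPb fQb in auto)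
  define m where "m x = \<bar>fP X3 x - fP X1 x * fP X2 x\<bar>" for x
  have mQ: "m \<in> borel_measurable Q" unfolding m_def using fPQ X1 X2 X3 by measurable
  have mb: "0 \<le> m x \<and> m x \<le> 1" for x
  proof -
    have "0 \<le> fP X1 x * fP X2 x" "fP X1 x * fP X2 x \<le> 1"
      using fPb[of X1 x] fPb[of X2 x] by (auto intro: mult_le_one)
    then show ?thesis unfolding m_def using fPb[of X3 x] by auto
  qed
  have mP0: "(\<integral>x. m x \<partial>P) = 0"
  proof -
    have "AE x in P. m x = 0"
      using fPae[OF X1] fPae[OF X2] fPae[OF X3] ciP unfolding m_def by eventually_elim auto
    moreover have mP: "m \<in> borel_measurable P" using mQ measurable_cong_sets[OF sPQ refl] by blast
    ultimately have "(\<integral>x. m x \<partial>P) = (\<integral>x. 0 \<partial>P)"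
      by (intro integral_cong_AE) auto
    then show ?thesis by simp
  qed
  have mid: "(\<integral>x. m x \<partial>Q) \<le> d"
    using tv_fun[OF P Q sPQ mQ _ dC] mb mP0 by auto
  have intb: "integrable Q f" if "f \<in> borel_measurable Q" "\<And>x. \<bar>f x\<bar> \<le> 2" for f :: "_ \<Rightarrow> real"
    by (rule bnd_int[OF fmQ that(1)]) (use that in auto)
  have absb: "\<bar>\<bar>a - b\<bar>\<bar> \<le> 2" if "0 \<le> a \<and> a \<le> 1" "0 \<le> b \<and> b \<le> 1" for a b :: real
    using that by auto
  let ?L = "\<lambda>x. \<bar>fQ X3 x - fQ X1 x * fQ X2 x\<bar>"
  let ?R = "\<lambda>x. \<bar>fP X3 x - fQ X3 x\<bar> + m x + \<bar>fP X1 x - fQ X1 x\<bar> + \<bar>fP X2 x - fQ X2 x\<bar>"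
  have i3: "integrable Q (\<lambda>x. \<bar>fP X3 x - fQ X3 x\<bar>)"
    by (rule intb) (use fPQ[OF X3] fQb fPb absb in auto)
  have i1: "integrable Q (\<lambda>x. \<bar>fP X1 x - fQ X1 x\<bar>)"
    by (rule intb) (use fPQ[OF X1] fQb fPb absb in auto)
  have i2: "integrable Q (\<lambda>x. \<bar>fP X2 x - fQ X2 x\<bar>)"
    by (rule intb) (use fPQ[OF X2] fQb fPb absb in auto)
  have im: "integrable Q m" by (rule intb[OF mQ]) (use mb in \<open>smt (verit)\<close>)
  have iL: "integrable Q ?L"
  proof (rule intb)
    show "?L \<in> borel_measurable Q" using fPQ X1 X2 X3 by measurable
    fix x
    have "0 \<le> fQ X1 x * fQ X2 x" "fQ X1 x * fQ X2 x \<le> 1"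
      using fQb[of X1 x] fQb[of X2 x] by (auto intro: mult_le_one)
    then show "\<bar>?L x\<bar> \<le> 2" using fQb[of X3 x] by auto
  qed
  have "(\<integral>x. ?L x \<partial>Q) \<le> (\<integral>x. ?R x \<partial>Q)"
  proof (rule integral_mono[OF iL])
    show "integrable Q ?R" using i1 i2 i3 im by auto
    fix x show "?L x \<le> ?R x" unfolding m_def
      using ineq4[of "fP X1 x" "fQ X2 x" "fQ X3 x" "fQ X1 x" "fP X3 x" "fP X2 x"] fPb fQb
      by (simp add: abs_minus_commute)
  qed
  also have "(\<integral>x. ?R x \<partial>Q) = (\<integral>x. \<bar>fP X3 x - fQ X3 x\<bar> \<partial>Q) + (\<integral>x. m x \<partial>Q)
      + (\<integral>x. \<bar>fP X1 x - fQ X1 x\<bar> \<partial>Q) + (\<integral>x. \<bar>fP X2 x - fQ X2 x\<bar> \<partial>Q)"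
    using i1 i2 i3 im by simp
  also have "\<dots> \<le> 4 * d + d + 4 * d + 4 * d"
    using close[OF X1] close[OF X2] close[OF X3] mid by linarith
  finally show ?thesis unfolding fQ_def by simp
qed



theorem mainTheorem9:
  fixes Ms :: "'s measure" and Mw :: "'w measure" and Mz :: "'z measure"
    and P :: "nat \<Rightarrow> ('s \<times> 'w \<times> 'z) measure" and Q :: "('s \<times> 'w \<times> 'z) measure"
  defines "\<Omega> \<equiv> Ms \<Otimes>\<^sub>M (Mw \<Otimes>\<^sub>M Mz)"
  assumes "\<And>n. P n \<in> prob_measures \<Omega>"
    and "\<And>n. cond_indep (P n) fst Ms (fst \<circ> snd) Mw (snd \<circ> snd) Mz"
    and "Q \<in> prob_measures \<Omega>"
    and "tv_converges P Q"
  shows "cond_indep Q fst Ms (fst \<circ> snd) Mw (snd \<circ> snd) Mz"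
proof -
  have sPO: "sets (P n) = sets \<Omega>" and Pp: "prob_space (P n)" for n
    using assms(2)[of n] unfolding prob_measures_def by auto
  have sQO: "sets Q = sets \<Omega>" and Qp: "prob_space Q"
    using assms(4) unfolding prob_measures_def by auto
  have sPQ: "sets (P n) = sets Q" for n using sPO sQO by simp
  have spPQ: "space (P n) = space Q" for n using sPQ sets_eq_imp_space_eq by blast
  have Zm: "snd \<circ> snd \<in> measurable \<Omega> Mz" unfolding \<Omega>_def
    by (rule measurable_comp[OF measurable_snd measurable_snd])
  have Sm: "fst \<in> measurable \<Omega> Ms" unfolding \<Omega>_def by (rule measurable_fst)
  have Wm: "fst \<circ> snd \<in> measurable \<Omega> Mw" unfolding \<Omega>_def
    by (rule measurable_comp[OF measurable_snd measurable_fst])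
  have ZQ: "snd \<circ> snd \<in> measurable Q Mz" using Zm measurable_cong_sets[OF sQO refl] by blast
  have SQ: "fst \<in> measurable Q Ms" using Sm measurable_cong_sets[OF sQO refl] by blast
  have WQ: "fst \<circ> snd \<in> measurable Q Mw" using Wm measurable_cong_sets[OF sQO refl] by blast
  define F where "F = vimage_algebra (space Q) (snd \<circ> snd) Mz"
  have sFQ: "sets F \<subseteq> sets Q" unfolding F_def by (rule sets_image_in_sets[OF refl ZQ])
  have subQ: "subalgebra Q F" unfolding subalgebra_def using sFQ by (simp add: F_def)
  have subP: "subalgebra (P n) F" for n unfolding subalgebra_def using sFQ sPQ spPQ by (simp add: F_def)
  define d where "d n = (SUP C\<in>sets Q. \<bar>measure (P n) C - measure Q C\<bar>)" for n
  have dC: "\<bar>measure (P n) C - measure Q C\<bar> \<le> d n" if "C \<in> sets Q" for n C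
    unfolding d_def
  proof (rule cSUP_upper[OF that])
    show "bdd_above ((\<lambda>C. \<bar>measure (P n) C - measure Q C\<bar>) ` sets Q)"
    proof (rule bdd_aboveI2[where M=1])
      fix C
      have "measure (P n) C \<le> 1" "measure Q C \<le> 1"
        using prob_space.prob_le_1[OF Pp] prob_space.prob_le_1[OF Qp] by auto
      moreover have "0 \<le> measure (P n) C" "0 \<le> measure Q C" by auto
      ultimately show "\<bar>measure (P n) C - measure Q C\<bar> \<le> 1" unfolding abs_le_iff by linarith
    qed
  qed
  have d0: "d \<longlonglongrightarrow> 0" using assms(5) unfolding tv_converges_def d_def by simp
  show ?thesis unfolding cond_indep_def F_def[symmetric]
  proof (intro ballI)
    fix A B assume A: "A \<in> sets Ms" and B: "B \<in> sets Mw"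
    define X1 where "X1 = fst -` A \<inter> space Q"
    define X2 where "X2 = (fst \<circ> snd) -` B \<inter> space Q"
    define X3 where "X3 = fst -` A \<inter> (fst \<circ> snd) -` B \<inter> space Q"
    have X1: "X1 \<in> sets Q" unfolding X1_def using SQ A by (rule measurable_sets)
    have X2: "X2 \<in> sets Q" unfolding X2_def using WQ B by (rule measurable_sets)
    have X3: "X3 \<in> sets Q"
    proof -
      have "X3 = X1 \<inter> X2" unfolding X1_def X2_def X3_def by auto
      then show ?thesis using X1 X2 by simp
    qed
    have ciP: "AE x in P n. cond_prob (P n) F X3 x = cond_prob (P n) F X1 x * cond_prob (P n) F X2 x" for n
      using assms(3)[of n] A B unfolding cond_indep_def spPQ F_def[symmetric] X1_def X2_def X3_def
      by blast
    define cl where "cl Y x = max 0 (min 1 (cond_prob Q F Y x))" for Y x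
    define I where "I = (\<integral>x. \<bar>cl X3 x - cl X1 x * cl X2 x\<bar> \<partial>Q)"
    have In: "I \<le> 13 * d n" for n
      unfolding I_def cl_def
      by (rule ci_step[OF Pp Qp sPQ subP subQ X1 X2 X3 ciP dC])
    have "(\<lambda>n. 13 * d n) \<longlonglongrightarrow> 13 * 0" by (intro tendsto_intros d0)
    then have "I \<le> 0" using In by (intro LIMSEQ_le_const[of "\<lambda>n. 13 * d n"]) auto
    have clb: "0 \<le> cl Y x \<and> cl Y x \<le> 1" for Y x unfolding cl_def by simp
    have clQ: "cl Y \<in> borel_measurable Q" if "Y \<in> sets Q" for Y
      unfolding cl_def using cp_clamp(1)[OF Qp subQ that] measurable_from_subalg[OF subQ] by blast
    have clae: "AE x in Q. cl Y x = cond_prob Q F Y x" if "Y \<in> sets Q" for Y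
      unfolding cl_def using cp_clamp(3)[OF Qp subQ that] .
    have iI: "integrable Q (\<lambda>x. \<bar>cl X3 x - cl X1 x * cl X2 x\<bar>)"
    proof (rule bnd_int[where B=2])
      show "finite_measure Q" using Qp by (simp add: prob_space_def)
      show "(\<lambda>x. \<bar>cl X3 x - cl X1 x * cl X2 x\<bar>) \<in> borel_measurable Q"
        using clQ[OF X1] clQ[OF X2] clQ[OF X3] by measurable
      fix x
      have "0 \<le> cl X1 x * cl X2 x" "cl X1 x * cl X2 x \<le> 1"
        using clb[of X1 x] clb[of X2 x] by (auto intro: mult_le_one)
      then show "\<bar>\<bar>cl X3 x - cl X1 x * cl X2 x\<bar>\<bar> \<le> 2" using clb[of X3 x] by auto
    qed
    have "I = 0" using \<open>I \<le> 0\<close> unfolding I_def by (simp add: antisym)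
    then have "AE x in Q. \<bar>cl X3 x - cl X1 x * cl X2 x\<bar> = 0"
      unfolding I_def using integral_nonneg_eq_0_iff_AE[OF iI] by auto
    then show "AE x in Q. cond_prob Q F (fst -` A \<inter> (fst \<circ> snd) -` B \<inter> space Q) x =
                 cond_prob Q F (fst -` A \<inter> space Q) x * cond_prob Q F ((fst \<circ> snd) -` B \<inter> space Q) x"
      using clae[OF X1] clae[OF X2] clae[OF X3] unfolding X1_def X2_def X3_def
      by eventually_elim auto
  qed
qed

end
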